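(* Let $2\le N\le L-1$, let $x>0$, and let $r_1,\dots,r_{L-N},\ell_1,\dots,\ell_{L-N}$ be real parameters. Define $r,\ell:\{0,1,\dots,L-N\}^2\to\mathbb{R}$ (on pairs $(k,n)$ with $k+n\le L-N$) by $r(0,n)=\ell(0,n)=0$ for $n\ge 0$; $r(k,0)=r_k$, $\ell(k,0)=\ell_k$ for $k\ge 1$; $r(1,n)=x\,r_{n+1}$, $\ell(1,n)=x\,\ell_{n+1}$ for $n\ge1$; and for $k\ge 2$, $n\ge 1$, $$r(k,n)=x\,r_{n+k}+\sum_{j=n+1}^{n+k-1} r_j-\sum_{j=1}^{k-1} r_j,\qquad \ell(k,n)=x\,\ell_{n+k}+\sum_{j=n+1}^{n+k-1} \ell_j-\sum_{j=1}^{k-1} \ell_j .$$ Assume all these values are nonnegative. Consider the exclusion process on $\Omega_{L,N}$ in which, independently, particle $i$ jumps one site to the right at rate $r(h_i,h_{i-1})$ and one site to the left at rate $\ell(h_{i-1},h_i)$. Then the probability measure $$\hat\pi(\boldsymbol\eta)=\frac{1}{Z}\,x^{\sum_{j\in\mathbb{T}_L}\eta_j\eta_{j+1}},\qquad \boldsymbol\eta\in\Omega_{L,N},$$ with $Z$ the normalizing constant, is an invariant (stationary) measure of this process.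
   Context: $\mathbb{T}_L=\mathbb{Z}/L\mathbb{Z}$ is the ring with $L$ sites. $\Omega_{L,N}$ is the set of configurations $\boldsymbol\eta=(\eta_j)_{j\in\mathbb{T}_L}\in\{0,1\}^{\mathbb{T}_L}$ with $\sum_j\eta_j=N$ ($\eta_j=1$ means site $j$ is occupied by a particle). Particles are labeled $1,\dots,N$ in cyclic (increasing) order, with positions $p_1,\dots,p_N$, labels taken mod $N$. The headway $h_i$ is the number of empty sites between particle $i$ and particle $i+1$ (so $h_i\ge0$ and $\sum_i h_i=L-N$); $h_{i-1}$ is the number of empty sites between particle $i-1$ and particle $i$. A right jump of particle $i$ moves it from $p_i$ to $p_i+1$ (possible only if $h_i\ge1$), a left jump moves it to $p_i-1$ (possible only if $h_{i-1}\ge1$); the process is the continuous-time Markov chain with these jumps. Note $\sum_j\eta_j\eta_{j+1}=\#\{i: h_i=0\}$. *)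

theory Defs
  imports Complex_Main
begin

text \<open>Configurations on the ring of L sites 0..L-1 (arithmetic mod L) are functions
  nat => nat with values in {0,1}, vanishing outside {0..<L}.\<close>

definition Omega :: "nat \<Rightarrow> nat \<Rightarrow> (nat \<Rightarrow> nat) set" where
  "Omega L N = {\<eta>. (\<forall>j. \<eta> j \<le> 1) \<and> (\<forall>j\<ge>L. \<eta> j = 0) \<and> (\<Sum>j<L. \<eta> j) = N}"

definition rate :: "(nat \<Rightarrow> real) \<Rightarrow> real \<Rightarrow> nat \<Rightarrow> nat \<Rightarrow> real" where
  "rate rs x k n =
     (if k = 0 then 0
      else if n = 0 then rs k
      else if k = 1 then x * rs (n + 1)
      else x * rs (n + k) + (\<Sum>j\<in>{n+1..n+k-1}. rs j) - (\<Sum>j\<in>{1..k-1}. rs j))"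

definition hR :: "nat \<Rightarrow> (nat \<Rightarrow> nat) \<Rightarrow> nat \<Rightarrow> nat" where
  "hR L \<eta> p = (LEAST k. \<eta> ((p + Suc k) mod L) = 1)"

definition hL :: "nat \<Rightarrow> (nat \<Rightarrow> nat) \<Rightarrow> nat \<Rightarrow> nat" where
  "hL L \<eta> p = (LEAST k. \<eta> ((p + (L - Suc k)) mod L) = 1)"

definition swap_sites :: "(nat \<Rightarrow> nat) \<Rightarrow> nat \<Rightarrow> nat \<Rightarrow> (nat \<Rightarrow> nat)" where
  "swap_sites \<eta> a b = \<eta>(a := \<eta> b, b := \<eta> a)"

text \<open>Transition rate from \<eta> to \<eta>': particle at p jumps right at rate r(h_i, h_{i-1})
  and left at rate l(h_{i-1}, h_i).\<close>
definition Q :: "nat \<Rightarrow> (nat \<Rightarrow> real) \<Rightarrow> (nat \<Rightarrow> real) \<Rightarrow> real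
                 \<Rightarrow> (nat \<Rightarrow> nat) \<Rightarrow> (nat \<Rightarrow> nat) \<Rightarrow> real" where
  "Q L rs ls x \<eta> \<eta>' =
     (\<Sum>p<L.
        (if \<eta> p = 1 \<and> \<eta> ((p + 1) mod L) = 0 \<and> \<eta>' = swap_sites \<eta> p ((p + 1) mod L)
         then rate rs x (hR L \<eta> p) (hL L \<eta> p) else 0)
      + (if \<eta> p = 1 \<and> \<eta> ((p + (L - 1)) mod L) = 0 \<and> \<eta>' = swap_sites \<eta> p ((p + (L - 1)) mod L)
         then rate ls x (hL L \<eta> p) (hR L \<eta> p) else 0))"

definition invariant_measure :: "'s set \<Rightarrow> ('s \<Rightarrow> 's \<Rightarrow> real) \<Rightarrow> ('s \<Rightarrow> real) \<Rightarrow> bool" where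
  "invariant_measure S q \<pi> \<longleftrightarrow>
     (\<forall>\<eta>\<in>S. (\<Sum>\<eta>'\<in>S. \<pi> \<eta>' * q \<eta>' \<eta>) = (\<Sum>\<eta>'\<in>S. \<pi> \<eta> * q \<eta> \<eta>'))"

definition nn_pairs :: "nat \<Rightarrow> (nat \<Rightarrow> nat) \<Rightarrow> nat" where
  "nn_pairs L \<eta> = (\<Sum>j<L. \<eta> j * \<eta> ((j + 1) mod L))"

definition pihat :: "nat \<Rightarrow> nat \<Rightarrow> real \<Rightarrow> (nat \<Rightarrow> nat) \<Rightarrow> real" where
  "pihat L N x \<eta> = x ^ nn_pairs L \<eta> / (\<Sum>\<zeta>\<in>Omega L N. x ^ nn_pairs L \<zeta>)"

end

theory Submission
  imports Defs
begin
definition phi :: "(nat \<Rightarrow> real) \<Rightarrow> nat \<Rightarrow> real" where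
  "phi rs k = (if k = 0 then 0 else rs k)"

lemma rate_zero[simp]: "rate rs x 0 n = 0" by (simp add: rate_def)

lemma rate_alg:
  "x ^ (if a = 0 then 1 else 0) * rate rs x a b
   - (if 1 \<le> b then x ^ (if b = 1 then 1 else 0) * rate rs x (a+1) (b-1) else 0)
   = x ^ (if a = 0 then 1 else 0) * (phi rs a - phi rs b)"
proof -
  consider "b = 0" | "b = 1" | "b \<ge> 2" by linarith
  then show ?thesis
  proof cases
    case 1 then show ?thesis by (simp add: rate_def phi_def)
  next
    case 2
    consider "a = 0" | "a = 1" | "a \<ge> 2" by linarith
    then show ?thesis
    proof cases
      case 3
      have "(\<Sum>j\<in>{2..a}. rs j) = (\<Sum>j\<in>{1..a-1}. rs j) - rs 1 + rs a"
      proof -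
        have e1: "{1..a} = insert 1 {2..a}" using 3 by auto
        have e2: "{1..a} = insert a {1..a-1}" using 3 by auto
        have "(\<Sum>j\<in>{1..a}. rs j) = rs 1 + (\<Sum>j\<in>{2..a}. rs j)" unfolding e1 by simp
        moreover have "(\<Sum>j\<in>{1..a}. rs j) = rs a + (\<Sum>j\<in>{1..a-1}. rs j)" unfolding e2 using 3 by simp
        ultimately show ?thesis by linarith
      qed
      then show ?thesis using 2 3 by (simp add: rate_def phi_def algebra_simps eval_nat_numeral)
    qed (use 2 in \<open>auto simp: rate_def phi_def\<close>)
  next
    case 3
    consider "a = 0" | "a = 1" | "a \<ge> 2" by linarith
    then show ?thesis
    proof cases
      case 1 then show ?thesis using 3 by (simp add: rate_def phi_def)
    next
      case 2 then show ?thesis using 3 by (simp add: rate_def phi_def)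
    next
      case a: 3
      have s1: "(\<Sum>j\<in>{b..a+b-1}. rs j) = rs b + (\<Sum>j\<in>{b+1..a+b-1}. rs j)"
        using a by (subst sum.atLeast_Suc_atMost) auto
      have s2: "(\<Sum>j\<in>{1..a}. rs j) = (\<Sum>j\<in>{1..a-1}. rs j) + rs a"
        using a by (cases a) (auto simp: sum.cl_ivl_Suc)
      show ?thesis using 3 a s1 s2
        by (simp add: rate_def phi_def algebra_simps add.commute)
    qed
  qed
qed

lemma md: "(x::nat) < 2*L \<Longrightarrow> x mod L = (if x < L then x else x - L)"
  by (simp add: le_mod_geq)

lemma mod_inj: "(q::nat) < L \<Longrightarrow> m1 < L \<Longrightarrow> m2 < L \<Longrightarrow> (q+m1) mod L = (q+m2) mod L \<Longrightarrow> m1 = m2"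
proof -
  assume a: "q < L" "m1 < L" "m2 < L" "(q+m1) mod L = (q+m2) mod L"
  then show "m1 = m2" using md[of "q+m1" L] md[of "q+m2" L] by (auto split: if_splits)
qed

lemma mod_ne: "(q::nat) < L \<Longrightarrow> m1 < L \<Longrightarrow> m2 < L \<Longrightarrow> m1 \<noteq> m2 \<Longrightarrow> (q+m1) mod L \<noteq> (q+m2) mod L"
  using mod_inj by blast

lemma mod_ne0: "(q::nat) < L \<Longrightarrow> m < L \<Longrightarrow> 0 < m \<Longrightarrow> (q+m) mod L \<noteq> q"
  using mod_ne[of q L m 0] by simp

lemma modshift: "(A::nat) + B = C + L \<Longrightarrow> (A mod L + B) mod L = C mod L"
proof -
  assume h: "A + B = C + L"
  have "(A mod L + B) mod L = (A + B) mod L" by (rule mod_add_left_eq)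
  also have "\<dots> = (C + L) mod L" using h by simp
  also have "\<dots> = C mod L" by simp
  finally show ?thesis .
qed

lemma modshift0: "(A::nat) + B = C \<Longrightarrow> (A mod L + B) mod L = C mod L"
proof -
  assume h: "A + B = C"
  have "(A mod L + B) mod L = (A + B) mod L" by (rule mod_add_left_eq)
  then show ?thesis using h by simp
qed

lemma sp1: "0 < L \<Longrightarrow> ((q + (L-1)) mod L + Suc i) mod L = (q + i) mod L"
  by (rule modshift) simp

lemma sp2: "Suc (Suc i) \<le> L \<Longrightarrow> ((q + (L-1)) mod L + (L - Suc i)) mod L = (q + (L - Suc (Suc i))) mod L"
  by (rule modshift) simp

lemma sp3: "Suc i \<le> L \<Longrightarrow> ((q+1) mod L + (L - Suc i)) mod L = (q + (L - i)) mod L"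
  by (rule modshift0) simp

lemma sp4: "((q+1) mod L + Suc i) mod L = (q + Suc (Suc i)) mod L"
  by (rule modshift0) simp

lemma sp5: "i \<le> k \<Longrightarrow> k < L \<Longrightarrow> ((q + Suc k) mod L + (L - Suc i)) mod L = (q + (k - i)) mod L"
  by (rule modshift) simp

lemma rot_sum:
  assumes "0 < L"
  shows "(\<Sum>q<L. g ((q + (c::nat)) mod L)) = (\<Sum>q<L. (g q :: real))"
proof -
  have inj: "inj_on (\<lambda>q. (q + c) mod L) {..<L}"
  proof
    fix a b assume ab: "a \<in> {..<L}" "b \<in> {..<L}" "(a + c) mod L = (b + c) mod L"
    have "(c mod L + a) mod L = (c mod L + b) mod L"
      using ab(3) mod_add_left_eq[of c L a] mod_add_left_eq[of c L b] by (simp add: add.commute)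
    then show "a = b" using mod_inj[of "c mod L" L a b] ab assms by auto
  qed
  have im: "(\<lambda>q. (q + c) mod L) ` {..<L} = {..<L}"
    by (rule endo_inj_surj) (use inj assms in auto)
  have "bij_betw (\<lambda>q. (q + c) mod L) {..<L} {..<L}"
    using inj im by (simp add: bij_betw_def)
  then show ?thesis by (rule sum.reindex_bij_betw)
qed

lemma hR_eq: "\<eta> ((p + Suc k) mod L) = 1 \<Longrightarrow> (\<forall>i<k. \<eta> ((p + Suc i) mod L) \<noteq> 1) \<Longrightarrow> hR L \<eta> p = k"
  unfolding hR_def by (rule Least_equality) (auto simp: not_less[symmetric])

lemma hL_eq: "\<eta> ((p + (L - Suc k)) mod L) = 1 \<Longrightarrow> (\<forall>i<k. \<eta> ((p + (L - Suc i)) mod L) \<noteq> 1) \<Longrightarrow> hL L \<eta> p = k"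
  unfolding hL_def by (rule Least_equality) (auto simp: not_less[symmetric])

lemma hR_spec:
  assumes "p < L" "\<eta> p = 1"
  shows "\<eta> ((p + Suc (hR L \<eta> p)) mod L) = 1" "\<forall>i<hR L \<eta> p. \<eta> ((p + Suc i) mod L) \<noteq> 1"
    "hR L \<eta> p < L"
proof -
  have ex: "\<eta> ((p + Suc (L-1)) mod L) = 1" using assms by simp
  show "\<eta> ((p + Suc (hR L \<eta> p)) mod L) = 1" unfolding hR_def by (rule LeastI[of "\<lambda>k. \<eta> ((p + Suc k) mod L) = 1", OF ex])
  show "\<forall>i<hR L \<eta> p. \<eta> ((p + Suc i) mod L) \<noteq> 1" unfolding hR_def using not_less_Least by blast
  have "hR L \<eta> p \<le> L - 1" unfolding hR_def by (rule Least_le[of "\<lambda>k. \<eta> ((p + Suc k) mod L) = 1", OF ex])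
  then show "hR L \<eta> p < L" using assms by linarith
qed

lemma hL_spec:
  assumes "p < L" "\<eta> p = 1"
  shows "\<eta> ((p + (L - Suc (hL L \<eta> p))) mod L) = 1" "\<forall>i<hL L \<eta> p. \<eta> ((p + (L - Suc i)) mod L) \<noteq> 1"
    "hL L \<eta> p < L"
proof -
  have ex: "\<eta> ((p + (L - Suc (L-1))) mod L) = 1" using assms by simp
  show "\<eta> ((p + (L - Suc (hL L \<eta> p))) mod L) = 1" unfolding hL_def by (rule LeastI[of "\<lambda>k. \<eta> ((p + (L - Suc k)) mod L) = 1", OF ex])
  show "\<forall>i<hL L \<eta> p. \<eta> ((p + (L - Suc i)) mod L) \<noteq> 1" unfolding hL_def using not_less_Least by blast
  have "hL L \<eta> p \<le> L - 1" unfolding hL_def by (rule Least_le[of "\<lambda>k. \<eta> ((p + (L - Suc k)) mod L) = 1", OF ex])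
  then show "hL L \<eta> p < L" using assms by linarith
qed

lemma swap_invol: "swap_sites (swap_sites f a b) a b = f"
  by (auto simp: swap_sites_def fun_eq_iff)

lemma swap_Omega:
  assumes "\<eta> \<in> Omega L N" "a < L" "b < L"
  shows "swap_sites \<eta> a b \<in> Omega L N"
proof (cases "a = b")
  case True then show ?thesis using assms by (simp add: swap_sites_def)
next
  case False
  let ?s = "swap_sites \<eta> a b"
  have sub: "{a,b} \<subseteq> {..<L}" using assms by auto
  have "(\<Sum>j<L. ?s j) = (\<Sum>j\<in>{..<L} - {a,b}. ?s j) + (\<Sum>j\<in>{a,b}. ?s j)"
    by (rule sum.subset_diff[OF sub]) simp
  also have "(\<Sum>j\<in>{..<L} - {a,b}. ?s j) = (\<Sum>j\<in>{..<L} - {a,b}. \<eta> j)"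
    by (rule sum.cong) (auto simp: swap_sites_def)
  also have "(\<Sum>j\<in>{a,b}. ?s j) = (\<Sum>j\<in>{a,b}. \<eta> j)" using False by (simp add: swap_sites_def)
  also have "(\<Sum>j\<in>{..<L} - {a,b}. \<eta> j) + (\<Sum>j\<in>{a,b}. \<eta> j) = (\<Sum>j<L. \<eta> j)"
    by (rule sum.subset_diff[OF sub, symmetric]) simp
  finally show ?thesis using assms by (auto simp: Omega_def swap_sites_def)
qed


lemma predsucc: "(j::nat) < L \<Longrightarrow> ((j+1) mod L + (L-1)) mod L = j"
  by (subst modshift[where C=j]) auto

lemma nn_local:
  assumes L: "3 \<le> L" "u < L" and agree: "\<forall>j. j \<noteq> u \<and> j \<noteq> (u+1) mod L \<longrightarrow> \<eta>' j = \<eta> j"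
  shows "nn_pairs L \<eta> + (\<eta>' ((u + (L-1)) mod L) * \<eta>' u + \<eta>' u * \<eta>' ((u+1) mod L)
            + \<eta>' ((u+1) mod L) * \<eta>' ((u+2) mod L))
       = nn_pairs L \<eta>' + (\<eta> ((u + (L-1)) mod L) * \<eta> u + \<eta> u * \<eta> ((u+1) mod L)
            + \<eta> ((u+1) mod L) * \<eta> ((u+2) mod L))"
proof -
  define pu where "pu = (u + (L-1)) mod L"
  define v where "v = (u+1) mod L"
  define vv where "vv = (u+2) mod L"
  have u0: "(u + 0) mod L = u" using L by simp
  have d1: "pu \<noteq> u" unfolding pu_def using mod_ne0[of u L "L-1"] L by simp
  have d2: "u \<noteq> v" unfolding v_def using mod_ne0[of u L 1] L by simp
  have d3: "pu \<noteq> v" unfolding v_def pu_def using mod_ne[of u L "L-1" 1] L by simp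
  have s1: "(pu + 1) mod L = u" unfolding pu_def using sp1[of L u 0] L by simp
  have s2: "(v + 1) mod L = vv" unfolding v_def vv_def by (rule modshift0) simp
  have s3: "(u + 1) mod L = v" by (simp add: v_def)
  have sub: "{pu,u,v} \<subseteq> {..<L}" using L by (auto simp: pu_def v_def)
  let ?T = "\<lambda>f j. f j * f ((j+1) mod L)"
  have split: "(\<Sum>j<L. ?T f j) = (\<Sum>j\<in>{..<L} - {pu,u,v}. ?T f j) + (?T f pu + ?T f u + ?T f v)" for f :: "nat \<Rightarrow> nat"
  proof -
    have "(\<Sum>j<L. ?T f j) = (\<Sum>j\<in>{..<L} - {pu,u,v}. ?T f j) + (\<Sum>j\<in>{pu,u,v}. ?T f j)"
      by (rule sum.subset_diff[OF sub]) simp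
    then show ?thesis using d1 d2 d3 by (simp add: add.assoc)
  qed
  have rest: "(\<Sum>j\<in>{..<L} - {pu,u,v}. ?T \<eta>' j) = (\<Sum>j\<in>{..<L} - {pu,u,v}. ?T \<eta> j)"
  proof (rule sum.cong)
    fix j assume j: "j \<in> {..<L} - {pu,u,v}"
    have jl: "j < L" using j by auto
    have "(j+1) mod L \<noteq> u"
    proof
      assume "(j+1) mod L = u"
      then have "pu = j" unfolding pu_def using predsucc[OF jl] by simp
      then show False using j by auto
    qed
    moreover have "(j+1) mod L \<noteq> v"
    proof
      assume "(j+1) mod L = v"
      then have "((j+1) mod L + (L-1)) mod L = ((u+1) mod L + (L-1)) mod L" by (simp add: v_def)
      then have "j = u" using predsucc[OF jl] predsucc[OF L(2)] by simp
      then show False using j by auto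
    qed
    ultimately show "?T \<eta>' j = ?T \<eta> j" using agree j by (auto simp: v_def)
  qed simp
  have "nn_pairs L \<eta> + (\<eta>' pu * \<eta>' u + \<eta>' u * \<eta>' v + \<eta>' v * \<eta>' vv)
       = nn_pairs L \<eta>' + (\<eta> pu * \<eta> u + \<eta> u * \<eta> v + \<eta> v * \<eta> vv)"
    unfolding nn_pairs_def split[of \<eta>] split[of \<eta>'] rest
    using s1 s2 s3 by simp
  then show ?thesis by (simp only: pu_def v_def vv_def)
qed


lemma combine:
  assumes x: "(x::real) > 0" and b: "1 \<le> b"
    and w: "ws * x ^ (if a = 0 then 1 else 0) = we * x ^ (if b = 1 then 1 else 0)"
  shows "we * rate rs x a b - ws * rate rs x (a+1) (b-1) = we * (phi rs a - phi rs b)"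
proof -
  let ?e = "x ^ (if a = 0 then 1 else 0) :: real"
  have alg: "?e * rate rs x a b - x ^ (if b = 1 then 1 else 0) * rate rs x (a+1) (b-1)
     = ?e * (phi rs a - phi rs b)" using rate_alg[of x a rs b] b by simp
  have "?e * (we * rate rs x a b - ws * rate rs x (a+1) (b-1))
      = we * (?e * rate rs x a b - x ^ (if b = 1 then 1 else 0) * rate rs x (a+1) (b-1))"
    using w by (simp add: algebra_simps)
  also have "\<dots> = ?e * (we * (phi rs a - phi rs b))" using alg by simp
  finally show ?thesis using x by simp
qed

lemma finite_Omega: "finite (Omega L N)"
proof -
  let ?h = "\<lambda>f::nat\<Rightarrow>nat. {j. f j = 1}"
  have inj: "inj_on ?h (Omega L N)"
  proof
    fix f g assume f: "f \<in> Omega L N" and g: "g \<in> Omega L N" and e: "?h f = ?h g"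
    show "f = g"
    proof
      fix j
      have "f j \<le> 1" "g j \<le> 1" using f g by (auto simp: Omega_def)
      moreover have "f j = 1 \<longleftrightarrow> g j = 1" using e by blast
      ultimately show "f j = g j" by linarith
    qed
  qed
  have "?h ` Omega L N \<subseteq> Pow {..<L}"
  proof
    fix A assume "A \<in> ?h ` Omega L N"
    then obtain f where f: "f \<in> Omega L N" "A = ?h f" by blast
    have z: "\<forall>j\<ge>L. f j = 0" using f(1) by (simp add: Omega_def)
    have "j < L" if "f j = 1" for j
    proof (rule ccontr)
      assume "\<not> j < L" then have "f j = 0" using z by simp
      then show False using that by simp
    qed
    then show "A \<in> Pow {..<L}" using f by auto
  qed
  then have "finite (?h ` Omega L N)" by (rule finite_subset) simp
  then show ?thesis using inj by (rule finite_imageD)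
qed

locale cfg =
  fixes L N :: nat and \<eta> :: "nat \<Rightarrow> nat"
  assumes N2: "2 \<le> N" and NL: "N < L" and eta: "\<eta> \<in> Omega L N"
begin

lemma L3: "3 \<le> L" using N2 NL by linarith
lemma Lpos: "0 < L" using L3 by linarith

lemma le1: "\<eta> j \<le> 1" using eta by (simp add: Omega_def)
lemma zero: "L \<le> j \<Longrightarrow> \<eta> j = 0" using eta by (simp add: Omega_def)
lemma sumN: "(\<Sum>j<L. \<eta> j) = N" using eta by (simp add: Omega_def)
lemma ne1[simp]: "\<eta> j \<noteq> 1 \<longleftrightarrow> \<eta> j = 0" using le1[of j] by linarith
lemma ne1'[simp]: "\<eta> j \<noteq> Suc 0 \<longleftrightarrow> \<eta> j = 0" using le1[of j] by linarith

lemma other: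
  assumes "q < L" "\<eta> q = 1"
  shows "\<exists>q'<L. q' \<noteq> q \<and> \<eta> q' = 1"
proof (rule ccontr)
  assume nt: "\<not> ?thesis"
  then have z: "\<forall>j\<in>{..<L} - {q}. \<eta> j = 0"
  proof (intro ballI)
    fix j assume "j \<in> {..<L} - {q}"
    then have "\<not> \<eta> j = 1" using nt by auto
    then show "\<eta> j = 0" using le1[of j] by linarith
  qed
  have "(\<Sum>j<L. \<eta> j) = \<eta> q + (\<Sum>j\<in>{..<L} - {q}. \<eta> j)"
    using assms by (simp add: sum.remove)
  also have "(\<Sum>j\<in>{..<L} - {q}. \<eta> j) = 0" using z by simp
  finally show False using sumN assms N2 by simp
qed

lemma offset:
  assumes "q < L" "q' < L" "q' \<noteq> q"
  obtains d where "0 < d" "d < L" "(q + d) mod L = q'"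
proof -
  define d where "d = (q' + (L - q)) mod L"
  have "(q + d) mod L = (q + (q' + (L - q))) mod L" unfolding d_def by (simp add: mod_add_right_eq)
  also have "q + (q' + (L - q)) = q' + L" using assms by simp
  finally have e: "(q + d) mod L = q'" using assms by simp
  have "d \<noteq> 0"
  proof
    assume "d = 0" with e assms show False by simp
  qed
  moreover have "d < L" unfolding d_def using assms by simp
  ultimately show ?thesis using that e by auto
qed

lemma hR_le:
  assumes "q < L" "\<eta> q = 1"
  shows "hR L \<eta> q \<le> L - 2"
proof -
  obtain q' where q': "q' < L" "q' \<noteq> q" "\<eta> q' = 1" using other[OF assms] by auto
  obtain d where d: "0 < d" "d < L" "(q + d) mod L = q'" using offset[OF assms(1) q'(1,2)] by blast
  have "\<eta> ((q + Suc (d - 1)) mod L) = 1" using d q' by simp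
  then have "\<not> d - 1 < hR L \<eta> q" using hR_spec(2)[of q L \<eta>, OF assms] by auto
  then show ?thesis using d by linarith
qed

lemma hL_le:
  assumes "q < L" "\<eta> q = 1"
  shows "hL L \<eta> q \<le> L - 2"
proof -
  obtain q' where q': "q' < L" "q' \<noteq> q" "\<eta> q' = 1" using other[OF assms] by auto
  obtain d where d: "0 < d" "d < L" "(q' + d) mod L = q" using offset[OF q'(1) assms(1)] q'(2) by metis
  have "(q + (L - Suc (d - 1))) mod L = ((q' + d) mod L + (L - d)) mod L" using d by simp
  also have "\<dots> = q' mod L" by (rule modshift) (use d in simp)
  finally have "\<eta> ((q + (L - Suc (d - 1))) mod L) = 1" using q' by simp
  then have "\<not> d - 1 < hL L \<eta> q" using hL_spec(2)[of q L \<eta>, OF assms] by auto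
  then show ?thesis using d by linarith
qed

lemma partA:
  assumes q: "q < L" "\<eta> q = 1" and pq0: "\<eta> ((q + (L-1)) mod L) = 0"
  defines "pq \<equiv> (q + (L-1)) mod L"
  defines "s \<equiv> swap_sites \<eta> pq q"
  shows "hR L s pq = hR L \<eta> q + 1" "hL L s pq = hL L \<eta> q - 1"
    "nn_pairs L s + \<eta> ((q+1) mod L) = nn_pairs L \<eta> + \<eta> ((q + (L-2)) mod L)"
    "\<eta> ((q+1) mod L) = (if hR L \<eta> q = 0 then 1 else 0)"
    "\<eta> ((q + (L-2)) mod L) = (if hL L \<eta> q = 1 then 1 else 0)"
    "1 \<le> hL L \<eta> q"
proof -
  define a where "a = hR L \<eta> q"
  define b where "b = hL L \<eta> q"
  have La: "\<eta> ((q + Suc a) mod L) = 1" "\<forall>i<a. \<eta> ((q + Suc i) mod L) \<noteq> 1"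
    using hR_spec[of q L \<eta>, OF q] by (auto simp: a_def)
  have Lb: "\<eta> ((q + (L - Suc b)) mod L) = 1" "\<forall>i<b. \<eta> ((q + (L - Suc i)) mod L) \<noteq> 1"
    using hL_spec[of q L \<eta>, OF q] by (auto simp: b_def)
  have a2: "a \<le> L - 2" using hR_le[OF q] by (simp add: a_def)
  have b2: "b \<le> L - 2" using hL_le[OF q] by (simp add: b_def)
  have pqL: "pq < L" using Lpos by (simp add: pq_def)
  have pqq: "pq \<noteq> q" unfolding pq_def using mod_ne0[of q L "L-1"] q L3 by simp
  have b1: "1 \<le> b"
  proof (rule ccontr)
    assume "\<not> 1 \<le> b" then have "b = 0" by simp
    then show False using Lb(1) pq0 by simp
  qed
  then show "1 \<le> hL L \<eta> q" by (simp add: b_def)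
  have a3: "a \<le> L - 3"
  proof (rule ccontr)
    assume "\<not> a \<le> L - 3" then have "a = L - 2" using a2 by simp
    then have "Suc a = L - 1" using L3 by simp
    then show False using La(1) pq0 by simp
  qed
  have sq: "s q = 0" using pq0 by (simp add: s_def swap_sites_def pq_def)
  have spq: "s pq = 1" using q pqq by (simp add: s_def swap_sites_def)
  have soth: "j \<noteq> q \<Longrightarrow> j \<noteq> pq \<Longrightarrow> s j = \<eta> j" for j by (simp add: s_def swap_sites_def)
  have "hR L s pq = a + 1"
  proof (rule hR_eq)
    have e: "(pq + Suc (a+1)) mod L = (q + Suc a) mod L" unfolding pq_def using sp1[OF Lpos, of q "Suc a"] by simp
    have n1: "(q + Suc a) mod L \<noteq> q" using mod_ne0[of q L "Suc a"] q a3 L3 by simp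
    have n2: "(q + Suc a) mod L \<noteq> pq" unfolding pq_def using mod_ne[of q L "Suc a" "L-1"] q a3 L3 by simp
    show "s ((pq + Suc (a+1)) mod L) = 1" using e n1 n2 soth La(1) by simp
    show "\<forall>i<a+1. s ((pq + Suc i) mod L) \<noteq> 1"
    proof (intro allI impI)
      fix i assume i: "i < a + 1"
      have e: "(pq + Suc i) mod L = (q + i) mod L" unfolding pq_def using sp1[OF Lpos, of q i] by simp
      show "s ((pq + Suc i) mod L) \<noteq> 1"
      proof (cases i)
        case 0 then show ?thesis using e sq q by simp
      next
        case (Suc j)
        have n1: "(q + Suc j) mod L \<noteq> q" using mod_ne0[of q L "Suc j"] q a3 L3 i Suc by simp
        have n2: "(q + Suc j) mod L \<noteq> pq" unfolding pq_def
          using mod_ne[of q L "Suc j" "L-1"] q a3 L3 i Suc by simp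
        show ?thesis using e n1 n2 soth La(2) i Suc by simp
      qed
    qed
  qed
  then show "hR L s pq = hR L \<eta> q + 1" by (simp add: a_def)
  have "hL L s pq = b - 1"
  proof (rule hL_eq)
    have e: "(pq + (L - Suc (b-1))) mod L = (q + (L - Suc b)) mod L"
      unfolding pq_def using sp2[of "b-1" L q] b1 b2 L3 by simp
    have n1: "(q + (L - Suc b)) mod L \<noteq> q" using mod_ne0[of q L "L - Suc b"] q b2 L3 by simp
    have n2: "(q + (L - Suc b)) mod L \<noteq> pq" unfolding pq_def
      using mod_ne[of q L "L - Suc b" "L-1"] q b1 b2 L3 by simp
    show "s ((pq + (L - Suc (b-1))) mod L) = 1" using e n1 n2 soth Lb(1) by simp
    show "\<forall>i<b-1. s ((pq + (L - Suc i)) mod L) \<noteq> 1"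
    proof (intro allI impI)
      fix i assume i: "i < b - 1"
      have e: "(pq + (L - Suc i)) mod L = (q + (L - Suc (Suc i))) mod L"
        unfolding pq_def using sp2[of i L q] i b2 L3 by simp
      have n1: "(q + (L - Suc (Suc i))) mod L \<noteq> q" using mod_ne0[of q L "L - Suc (Suc i)"] q b2 L3 i by simp
      have n2: "(q + (L - Suc (Suc i))) mod L \<noteq> pq" unfolding pq_def
        using mod_ne[of q L "L - Suc (Suc i)" "L-1"] q i b2 L3 by simp
      show "s ((pq + (L - Suc i)) mod L) \<noteq> 1" using e n1 n2 soth Lb(2) i by simp
    qed
  qed
  then show "hL L s pq = hL L \<eta> q - 1" by (simp add: b_def)
  show "\<eta> ((q+1) mod L) = (if hR L \<eta> q = 0 then 1 else 0)"
  proof (cases "a = 0")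
    case True then show ?thesis using La(1) a_def by simp
  next
    case False
    then have "\<eta> ((q + Suc 0) mod L) \<noteq> 1" using La(2) by blast
    then show ?thesis using False a_def by simp
  qed
  have pp: "(pq + (L-1)) mod L = (q + (L-2)) mod L"
    unfolding pq_def using sp2[of 0 L q] L3 by (simp add: numeral_2_eq_2)
  show "\<eta> ((q + (L-2)) mod L) = (if hL L \<eta> q = 1 then 1 else 0)"
  proof (cases "b = 1")
    case True then show ?thesis using Lb(1) b_def by (simp add: numeral_2_eq_2)
  next
    case False
    then have "1 < b" using b1 by simp
    then have "\<eta> ((q + (L - Suc 1)) mod L) \<noteq> 1" using Lb(2) by blast
    then show ?thesis using False b_def by (simp add: numeral_2_eq_2)
  qed
  have e1: "(pq+1) mod L = q" using sp1[OF Lpos, of q 0] q by (simp add: pq_def)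
  have ag: "\<forall>j. j \<noteq> pq \<and> j \<noteq> (pq+1) mod L \<longrightarrow> s j = \<eta> j"
    using soth unfolding e1 by blast
  have nl: "nn_pairs L \<eta> + (s ((pq + (L-1)) mod L) * s pq + s pq * s ((pq+1) mod L)
            + s ((pq+1) mod L) * s ((pq+2) mod L))
       = nn_pairs L s + (\<eta> ((pq + (L-1)) mod L) * \<eta> pq + \<eta> pq * \<eta> ((pq+1) mod L)
            + \<eta> ((pq+1) mod L) * \<eta> ((pq+2) mod L))"
    by (rule nn_local[OF L3 pqL ag])
  have e2: "(pq+2) mod L = (q+1) mod L" using sp1[OF Lpos, of q 1] by (simp add: pq_def numeral_2_eq_2)
  have n1: "(q + (L-2)) mod L \<noteq> q" using mod_ne0[of q L "L-2"] q L3 by simp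
  have n2: "(q + (L-2)) mod L \<noteq> pq" unfolding pq_def using mod_ne[of q L "L-2" "L-1"] q L3 by simp
  have "s ((q + (L-2)) mod L) = \<eta> ((q + (L-2)) mod L)" using soth n1 n2 by simp
  then show "nn_pairs L s + \<eta> ((q+1) mod L) = nn_pairs L \<eta> + \<eta> ((q + (L-2)) mod L)"
    using nl e1 e2 pp sq spq q pq0 by (simp add: pq_def)
qed

lemma partB:
  assumes q: "q < L" "\<eta> q = 1" and sq0: "\<eta> ((q + 1) mod L) = 0"
  defines "sq \<equiv> (q + 1) mod L"
  defines "s \<equiv> swap_sites \<eta> sq q"
  shows "hL L s sq = hL L \<eta> q + 1" "hR L s sq = hR L \<eta> q - 1"
    "nn_pairs L s + \<eta> ((q + (L-1)) mod L) = nn_pairs L \<eta> + \<eta> ((q + 2) mod L)"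
    "\<eta> ((q + (L-1)) mod L) = (if hL L \<eta> q = 0 then 1 else 0)"
    "\<eta> ((q + 2) mod L) = (if hR L \<eta> q = 1 then 1 else 0)"
    "1 \<le> hR L \<eta> q"
proof -
  define a where "a = hR L \<eta> q"
  define b where "b = hL L \<eta> q"
  have La: "\<eta> ((q + Suc a) mod L) = 1" "\<forall>i<a. \<eta> ((q + Suc i) mod L) \<noteq> 1"
    using hR_spec[of q L \<eta>, OF q] by (auto simp: a_def)
  have Lb: "\<eta> ((q + (L - Suc b)) mod L) = 1" "\<forall>i<b. \<eta> ((q + (L - Suc i)) mod L) \<noteq> 1"
    using hL_spec[of q L \<eta>, OF q] by (auto simp: b_def)
  have a2: "a \<le> L - 2" using hR_le[OF q] by (simp add: a_def)
  have b2: "b \<le> L - 2" using hL_le[OF q] by (simp add: b_def)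
  have sqL: "sq < L" using Lpos by (simp add: sq_def)
  have sqq: "sq \<noteq> q" unfolding sq_def using mod_ne0[of q L 1] q L3 by simp
  have a1: "1 \<le> a"
  proof (rule ccontr)
    assume "\<not> 1 \<le> a" then have "a = 0" by simp
    then show False using La(1) sq0 by simp
  qed
  then show "1 \<le> hR L \<eta> q" by (simp add: a_def)
  have b3: "b \<le> L - 3"
  proof (rule ccontr)
    assume "\<not> b \<le> L - 3" then have "b = L - 2" using b2 by simp
    then have "L - Suc b = 1" using L3 by simp
    then show False using Lb(1) sq0 by simp
  qed
  have ssq: "s q = 0" using sq0 by (simp add: s_def swap_sites_def sq_def)
  have ssqq: "s sq = 1" using q sqq by (simp add: s_def swap_sites_def)
  have soth: "j \<noteq> q \<Longrightarrow> j \<noteq> sq \<Longrightarrow> s j = \<eta> j" for j by (simp add: s_def swap_sites_def)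
  have "hL L s sq = b + 1"
  proof (rule hL_eq)
    have e: "(sq + (L - Suc (b+1))) mod L = (q + (L - Suc b)) mod L"
      unfolding sq_def using sp3[of "b+1" L q] b3 L3 by simp
    have n1: "(q + (L - Suc b)) mod L \<noteq> q" using mod_ne0[of q L "L - Suc b"] q b3 L3 by simp
    have n2: "(q + (L - Suc b)) mod L \<noteq> sq" unfolding sq_def
      using mod_ne[of q L "L - Suc b" 1] q b3 L3 by simp
    show "s ((sq + (L - Suc (b+1))) mod L) = 1" using e n1 n2 soth Lb(1) by simp
    show "\<forall>i<b+1. s ((sq + (L - Suc i)) mod L) \<noteq> 1"
    proof (intro allI impI)
      fix i assume i: "i < b + 1"
      have e: "(sq + (L - Suc i)) mod L = (q + (L - i)) mod L"
        unfolding sq_def using sp3[of i L q] i b3 L3 by simp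
      show "s ((sq + (L - Suc i)) mod L) \<noteq> 1"
      proof (cases i)
        case 0 then show ?thesis using e ssq q by simp
      next
        case (Suc j)
        have n1: "(q + (L - Suc j)) mod L \<noteq> q" using mod_ne0[of q L "L - Suc j"] q b3 L3 i Suc by simp
        have n2: "(q + (L - Suc j)) mod L \<noteq> sq" unfolding sq_def
          using mod_ne[of q L "L - Suc j" 1] q b3 L3 i Suc by simp
        show ?thesis using e n1 n2 soth Lb(2) i Suc by simp
      qed
    qed
  qed
  then show "hL L s sq = hL L \<eta> q + 1" by (simp add: b_def)
  have "hR L s sq = a - 1"
  proof (rule hR_eq)
    have e: "(sq + Suc (a-1)) mod L = (q + Suc a) mod L"
      unfolding sq_def using sp4[of q L "a-1"] a1 by simp
    have n1: "(q + Suc a) mod L \<noteq> q" using mod_ne0[of q L "Suc a"] q a2 L3 by simp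
    have n2: "(q + Suc a) mod L \<noteq> sq" unfolding sq_def
      using mod_ne[of q L "Suc a" 1] q a1 a2 L3 by simp
    show "s ((sq + Suc (a-1)) mod L) = 1" using e n1 n2 soth La(1) by simp
    show "\<forall>i<a-1. s ((sq + Suc i) mod L) \<noteq> 1"
    proof (intro allI impI)
      fix i assume i: "i < a - 1"
      have e: "(sq + Suc i) mod L = (q + Suc (Suc i)) mod L"
        unfolding sq_def using sp4[of q L i] by simp
      have n1: "(q + Suc (Suc i)) mod L \<noteq> q" using mod_ne0[of q L "Suc (Suc i)"] q a2 L3 i by simp
      have n2: "(q + Suc (Suc i)) mod L \<noteq> sq" unfolding sq_def
        using mod_ne[of q L "Suc (Suc i)" 1] q i a2 L3 by simp
      have h: "\<eta> ((q + Suc (Suc i)) mod L) \<noteq> 1" using La(2) i by (metis less_diff_conv Suc_eq_plus1)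
      show "s ((sq + Suc i) mod L) \<noteq> 1" using e n1 n2 soth h by simp
    qed
  qed
  then show "hR L s sq = hR L \<eta> q - 1" by (simp add: a_def)
  show "\<eta> ((q + (L-1)) mod L) = (if hL L \<eta> q = 0 then 1 else 0)"
  proof (cases "b = 0")
    case True then show ?thesis using Lb(1) b_def by simp
  next
    case False
    then have "\<eta> ((q + (L - Suc 0)) mod L) \<noteq> 1" using Lb(2) by blast
    then show ?thesis using False b_def by simp
  qed
  show "\<eta> ((q + 2) mod L) = (if hR L \<eta> q = 1 then 1 else 0)"
  proof (cases "a = 1")
    case True then show ?thesis using La(1) a_def by (simp add: numeral_2_eq_2)
  next
    case False
    then have "1 < a" using a1 by simp
    then have "\<eta> ((q + Suc 1) mod L) \<noteq> 1" using La(2) by blast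
    then show ?thesis using False a_def by (simp add: numeral_2_eq_2)
  qed
  have ag: "\<forall>j. j \<noteq> q \<and> j \<noteq> (q+1) mod L \<longrightarrow> s j = \<eta> j"
    using soth unfolding sq_def by blast
  have nl: "nn_pairs L \<eta> + (s ((q + (L-1)) mod L) * s q + s q * s ((q+1) mod L)
            + s ((q+1) mod L) * s ((q+2) mod L))
       = nn_pairs L s + (\<eta> ((q + (L-1)) mod L) * \<eta> q + \<eta> q * \<eta> ((q+1) mod L)
            + \<eta> ((q+1) mod L) * \<eta> ((q+2) mod L))"
    by (rule nn_local[OF L3 q(1) ag])
  have n1: "(q + 2) mod L \<noteq> q" using mod_ne0[of q L 2] q L3 by simp
  have n2: "(q + 2) mod L \<noteq> sq" unfolding sq_def using mod_ne[of q L 2 1] q L3 by simp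
  have "s ((q + 2) mod L) = \<eta> ((q + 2) mod L)" using soth n1 n2 by simp
  then show "nn_pairs L s + \<eta> ((q + (L-1)) mod L) = nn_pairs L \<eta> + \<eta> ((q + 2) mod L)"
    using nl ssq ssqq q sq0 by (simp add: sq_def)
qed

lemma tele_key:
  assumes q: "q < L" and k: "k < L"
  shows "(\<eta> q = 1 \<and> hR L \<eta> q = k) \<longleftrightarrow> (\<eta> ((q + Suc k) mod L) = 1 \<and> hL L \<eta> ((q + Suc k) mod L) = k)"
proof -
  define p where "p = (q + Suc k) mod L"
  have pL: "p < L" using Lpos by (simp add: p_def)
  have bk: "(p + (L - Suc i)) mod L = (q + (k - i)) mod L" if "i \<le> k" for i
    unfolding p_def using sp5[of i k L q] that k by simp
  show ?thesis unfolding p_def[symmetric]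
  proof
    assume h: "\<eta> q = 1 \<and> hR L \<eta> q = k"
    have p1: "\<eta> p = 1" using hR_spec(1)[of q L \<eta>] q h by (simp add: p_def)
    have "hL L \<eta> p = k"
    proof (rule hL_eq)
      show "\<eta> ((p + (L - Suc k)) mod L) = 1" using bk[of k] h q by simp
      show "\<forall>i<k. \<eta> ((p + (L - Suc i)) mod L) \<noteq> 1"
      proof (intro allI impI)
        fix i assume i: "i < k"
        have "(p + (L - Suc i)) mod L = (q + Suc (k - Suc i)) mod L" using bk[of i] i
          by (simp add: Suc_diff_Suc)
        moreover have "k - Suc i < hR L \<eta> q" using h i by simp
        ultimately show "\<eta> ((p + (L - Suc i)) mod L) \<noteq> 1"
          using hR_spec(2)[of q L \<eta>] q h by simp
      qed
    qed
    then show "\<eta> p = 1 \<and> hL L \<eta> p = k" using p1 by simp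
  next
    assume h: "\<eta> p = 1 \<and> hL L \<eta> p = k"
    have q1: "\<eta> q = 1" using hL_spec(1)[of p L \<eta>] pL h bk[of k] q by simp
    have "hR L \<eta> q = k"
    proof (rule hR_eq)
      show "\<eta> ((q + Suc k) mod L) = 1" using h by (simp add: p_def)
      show "\<forall>i<k. \<eta> ((q + Suc i) mod L) \<noteq> 1"
      proof (intro allI impI)
        fix i assume i: "i < k"
        have "(p + (L - Suc (k - Suc i))) mod L = (q + (k - (k - Suc i))) mod L" using bk[of "k - Suc i"] by simp
        moreover have "k - (k - Suc i) = Suc i" using i by simp
        moreover have "k - Suc i < hL L \<eta> p" using h i by simp
        ultimately show "\<eta> ((q + Suc i) mod L) \<noteq> 1"
          using hL_spec(2)[of p L \<eta>] pL h by (metis)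
      qed
    qed
    then show "\<eta> q = 1 \<and> hR L \<eta> q = k" using q1 by simp
  qed
qed

lemma tele:
  "(\<Sum>q<L. if \<eta> q = 1 then f (hR L \<eta> q) else 0) = (\<Sum>q<L. if \<eta> q = 1 then f (hL L \<eta> q) else (0::real))"
proof -
  have ex1: "(if \<eta> q = 1 then f (hR L \<eta> q) else 0) = (\<Sum>k<L. if \<eta> q = 1 \<and> hR L \<eta> q = k then f k else 0)"
    if q: "q < L" for q
  proof (cases "\<eta> q = 1")
    case True
    have "hR L \<eta> q < L" using hR_spec(3)[of q L \<eta>] q True by simp
    then show ?thesis using True by (simp add: sum.delta')
  qed simp
  have ex2: "(if \<eta> q = 1 then f (hL L \<eta> q) else 0) = (\<Sum>k<L. if \<eta> q = 1 \<and> hL L \<eta> q = k then f k else 0)"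
    if q: "q < L" for q
  proof (cases "\<eta> q = 1")
    case True
    have "hL L \<eta> q < L" using hL_spec(3)[of q L \<eta>] q True by simp
    then show ?thesis using True by (simp add: sum.delta')
  qed simp
  have "(\<Sum>q<L. if \<eta> q = 1 then f (hR L \<eta> q) else 0)
      = (\<Sum>q<L. \<Sum>k<L. if \<eta> q = 1 \<and> hR L \<eta> q = k then f k else 0)"
    using ex1 by simp
  also have "\<dots> = (\<Sum>k<L. \<Sum>q<L. if \<eta> q = 1 \<and> hR L \<eta> q = k then f k else 0)"
    by (rule sum.swap)
  also have "\<dots> = (\<Sum>k<L. \<Sum>q<L. (\<lambda>p. if \<eta> p = 1 \<and> hL L \<eta> p = k then f k else 0) ((q + Suc k) mod L))"
    using tele_key by (intro sum.cong refl) simp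
  also have "\<dots> = (\<Sum>k<L. \<Sum>q<L. if \<eta> q = 1 \<and> hL L \<eta> q = k then f k else 0)"
    by (intro sum.cong refl rot_sum Lpos)
  also have "\<dots> = (\<Sum>q<L. \<Sum>k<L. if \<eta> q = 1 \<and> hL L \<eta> q = k then f k else 0)"
    by (rule sum.swap)
  also have "\<dots> = (\<Sum>q<L. if \<eta> q = 1 then f (hL L \<eta> q) else 0)"
    using ex2 by simp
  finally show ?thesis .
qed

lemma swap_at1: "a \<noteq> b \<Longrightarrow> swap_sites f a b a = f b" by (simp add: swap_sites_def)
lemma swap_at2: "swap_sites f a b b = f a" by (simp add: swap_sites_def)

lemma delta_in:
  assumes ab: "a < L" "b < L" "a \<noteq> b"
  shows "(\<Sum>\<eta>'\<in>Omega L N. w \<eta>' * (if \<eta>' a = 1 \<and> \<eta>' b = 0 \<and> \<eta> = swap_sites \<eta>' a b then v \<eta>' else (0::real)))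
       = (if \<eta> a = 0 \<and> \<eta> b = 1 then w (swap_sites \<eta> a b) * v (swap_sites \<eta> a b) else 0)"
proof -
  have eqv: "(\<eta>' a = 1 \<and> \<eta>' b = 0 \<and> \<eta> = swap_sites \<eta>' a b) \<longleftrightarrow> (\<eta>' = swap_sites \<eta> a b \<and> \<eta> a = 0 \<and> \<eta> b = 1)" for \<eta>'
  proof
    assume h: "\<eta>' a = 1 \<and> \<eta>' b = 0 \<and> \<eta> = swap_sites \<eta>' a b"
    then show "\<eta>' = swap_sites \<eta> a b \<and> \<eta> a = 0 \<and> \<eta> b = 1"
      using swap_invol[of \<eta>' a b] swap_at1[OF ab(3), of \<eta>'] swap_at2[of \<eta>' a b] by auto
  next
    assume h: "\<eta>' = swap_sites \<eta> a b \<and> \<eta> a = 0 \<and> \<eta> b = 1"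
    then show "\<eta>' a = 1 \<and> \<eta>' b = 0 \<and> \<eta> = swap_sites \<eta>' a b"
      using swap_invol[of \<eta> a b] swap_at1[OF ab(3), of \<eta>] swap_at2[of \<eta> a b] by auto
  qed
  have "(\<Sum>\<eta>'\<in>Omega L N. w \<eta>' * (if \<eta>' a = 1 \<and> \<eta>' b = 0 \<and> \<eta> = swap_sites \<eta>' a b then v \<eta>' else (0::real)))
     = (\<Sum>\<eta>'\<in>Omega L N. if swap_sites \<eta> a b = \<eta>' then (if \<eta> a = 0 \<and> \<eta> b = 1 then w \<eta>' * v \<eta>' else 0) else 0)"
  proof (intro sum.cong refl)
    fix \<eta>' show "w \<eta>' * (if \<eta>' a = 1 \<and> \<eta>' b = 0 \<and> \<eta> = swap_sites \<eta>' a b then v \<eta>' else 0)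
      = (if swap_sites \<eta> a b = \<eta>' then (if \<eta> a = 0 \<and> \<eta> b = 1 then w \<eta>' * v \<eta>' else 0) else 0)"
      unfolding eqv by auto
  qed
  also have "\<dots> = (if \<eta> a = 0 \<and> \<eta> b = 1 then w (swap_sites \<eta> a b) * v (swap_sites \<eta> a b) else 0)"
    using swap_Omega[OF eta ab(1,2)] finite_Omega by (subst sum.delta') auto
  finally show ?thesis .
qed

lemma delta_out:
  assumes "c \<Longrightarrow> t \<in> Omega L N"
  shows "(\<Sum>\<eta>'\<in>Omega L N. (if c \<and> \<eta>' = t then v else (0::real))) = (if c then v else 0)"
proof (cases c)
  case True
  then show ?thesis using assms finite_Omega by simp
qed simp

lemma site_A:
  assumes x: "x > 0" and q: "q < L"
  defines "pq \<equiv> (q + (L-1)) mod L"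
  defines "s \<equiv> swap_sites \<eta> pq ((pq+1) mod L)"
  shows "x ^ nn_pairs L \<eta> * (if \<eta> q = 1 \<and> \<eta> ((q+1) mod L) = 0 then rate rs x (hR L \<eta> q) (hL L \<eta> q) else 0)
       - (if \<eta> pq = 0 \<and> \<eta> ((pq+1) mod L) = 1 then x ^ nn_pairs L s * rate rs x (hR L s pq) (hL L s pq) else 0)
       = (if \<eta> q = 1 then x ^ nn_pairs L \<eta> * (phi rs (hR L \<eta> q) - phi rs (hL L \<eta> q)) else 0)"
proof -
  have e1: "(pq+1) mod L = q" using sp1[OF Lpos, of q 0] q by (simp add: pq_def)
  have rate0: "rate rs x a 0 = phi rs a" for a by (simp add: rate_def phi_def)
  have hR0: "\<eta> ((q+1) mod L) = 1 \<Longrightarrow> hR L \<eta> q = 0" by (rule hR_eq) simp_all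
  have hL0: "\<eta> pq = 1 \<Longrightarrow> hL L \<eta> q = 0" unfolding pq_def by (rule hL_eq) simp_all
  show ?thesis
  proof (cases "\<eta> q = 1")
    case False then show ?thesis using e1 by simp
  next
    case q1: True
    show ?thesis
    proof (cases "\<eta> pq = 1")
      case True
      then show ?thesis using q1 e1 hL0 hR0 rate0 le1[of "(q+1) mod L"]
        by (cases "\<eta> ((q+1) mod L) = 1") (auto simp: phi_def)
    next
      case False
      then have pq0: "\<eta> pq = 0" using le1[of pq] by linarith
      have sdef: "s = swap_sites \<eta> pq q" using e1 by (simp add: s_def)
      note A = partA[OF q q1 pq0[unfolded pq_def], folded pq_def, folded sdef]
      have out: "(if \<eta> q = 1 \<and> \<eta> ((q+1) mod L) = 0 then rate rs x (hR L \<eta> q) (hL L \<eta> q) else 0)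
          = rate rs x (hR L \<eta> q) (hL L \<eta> q)"
        using q1 A(4) by auto
      have w: "x ^ nn_pairs L s * x ^ (if hR L \<eta> q = 0 then 1 else 0)
             = x ^ nn_pairs L \<eta> * x ^ (if hL L \<eta> q = 1 then 1 else 0)"
        using A(3) A(4) A(5) by (simp add: power_add[symmetric])
      have "x ^ nn_pairs L \<eta> * rate rs x (hR L \<eta> q) (hL L \<eta> q)
           - x ^ nn_pairs L s * rate rs x (hR L \<eta> q + 1) (hL L \<eta> q - 1)
           = x ^ nn_pairs L \<eta> * (phi rs (hR L \<eta> q) - phi rs (hL L \<eta> q))"
        by (rule combine[OF x A(6) w])
      then show ?thesis using out q1 pq0 e1 A(1) A(2) by simp
    qed
  qed
qed

lemma site_B:
  assumes x: "x > 0" and q: "q < L"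
  defines "sq \<equiv> (q + 1) mod L"
  defines "s \<equiv> swap_sites \<eta> sq ((sq + (L-1)) mod L)"
  shows "x ^ nn_pairs L \<eta> * (if \<eta> q = 1 \<and> \<eta> ((q + (L-1)) mod L) = 0 then rate ls x (hL L \<eta> q) (hR L \<eta> q) else 0)
       - (if \<eta> sq = 0 \<and> \<eta> ((sq + (L-1)) mod L) = 1 then x ^ nn_pairs L s * rate ls x (hL L s sq) (hR L s sq) else 0)
       = (if \<eta> q = 1 then x ^ nn_pairs L \<eta> * (phi ls (hL L \<eta> q) - phi ls (hR L \<eta> q)) else 0)"
proof -
  have e1: "(sq + (L-1)) mod L = q" using predsucc[OF q] by (simp add: sq_def)
  have rate0: "rate ls x a 0 = phi ls a" for a by (simp add: rate_def phi_def)
  have hR0: "\<eta> sq = 1 \<Longrightarrow> hR L \<eta> q = 0" unfolding sq_def by (rule hR_eq) simp_all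
  have hL0: "\<eta> ((q + (L-1)) mod L) = 1 \<Longrightarrow> hL L \<eta> q = 0" by (rule hL_eq) simp_all
  show ?thesis
  proof (cases "\<eta> q = 1")
    case False then show ?thesis using e1 by simp
  next
    case q1: True
    show ?thesis
    proof (cases "\<eta> sq = 1")
      case True
      then show ?thesis using q1 e1 hL0 hR0 rate0 le1[of "(q + (L-1)) mod L"]
        by (cases "\<eta> ((q + (L-1)) mod L) = 1") (auto simp: phi_def)
    next
      case False
      then have sq0: "\<eta> sq = 0" using le1[of sq] by linarith
      have sdef: "s = swap_sites \<eta> sq q" using e1 by (simp add: s_def)
      note B = partB[OF q q1 sq0[unfolded sq_def], folded sq_def, folded sdef]
      have out: "(if \<eta> q = 1 \<and> \<eta> ((q + (L-1)) mod L) = 0 then rate ls x (hL L \<eta> q) (hR L \<eta> q) else 0)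
          = rate ls x (hL L \<eta> q) (hR L \<eta> q)"
        using q1 B(4) by auto
      have w: "x ^ nn_pairs L s * x ^ (if hL L \<eta> q = 0 then 1 else 0)
             = x ^ nn_pairs L \<eta> * x ^ (if hR L \<eta> q = 1 then 1 else 0)"
        using B(3) B(4) B(5) by (simp add: power_add[symmetric])
      have "x ^ nn_pairs L \<eta> * rate ls x (hL L \<eta> q) (hR L \<eta> q)
           - x ^ nn_pairs L s * rate ls x (hL L \<eta> q + 1) (hR L \<eta> q - 1)
           = x ^ nn_pairs L \<eta> * (phi ls (hL L \<eta> q) - phi ls (hR L \<eta> q))"
        by (rule combine[OF x B(6) w])
      then show ?thesis using out q1 sq0 e1 B(1) B(2) by simp
    qed
  qed
qed

lemma balance:
  assumes x: "(x::real) > 0"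
  shows "(\<Sum>\<eta>'\<in>Omega L N. x ^ nn_pairs L \<eta>' * Q L rs ls x \<eta>' \<eta>)
       = (\<Sum>\<eta>'\<in>Omega L N. x ^ nn_pairs L \<eta> * Q L rs ls x \<eta> \<eta>')"
proof -
  define w where "w = (\<lambda>\<zeta>. x ^ nn_pairs L \<zeta>)"
  define inR where "inR p = (if \<eta> p = 0 \<and> \<eta> ((p+1) mod L) = 1
     then w (swap_sites \<eta> p ((p+1) mod L)) * rate rs x (hR L (swap_sites \<eta> p ((p+1) mod L)) p) (hL L (swap_sites \<eta> p ((p+1) mod L)) p) else 0)" for p
  define inL where "inL p = (if \<eta> p = 0 \<and> \<eta> ((p + (L-1)) mod L) = 1
     then w (swap_sites \<eta> p ((p + (L-1)) mod L)) * rate ls x (hL L (swap_sites \<eta> p ((p + (L-1)) mod L)) p) (hR L (swap_sites \<eta> p ((p + (L-1)) mod L)) p) else 0)" for p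
  define outR where "outR p = (if \<eta> p = 1 \<and> \<eta> ((p+1) mod L) = 0 then rate rs x (hR L \<eta> p) (hL L \<eta> p) else 0)" for p
  define outL where "outL p = (if \<eta> p = 1 \<and> \<eta> ((p + (L-1)) mod L) = 0 then rate ls x (hL L \<eta> p) (hR L \<eta> p) else 0)" for p
  have neq1: "p \<noteq> (p+1) mod L" if "p < L" for p using mod_ne0[of p L 1] that L3 by simp
  have neq2: "p \<noteq> (p + (L-1)) mod L" if "p < L" for p using mod_ne0[of p L "L-1"] that L3 by simp
  have lhs: "(\<Sum>\<eta>'\<in>Omega L N. w \<eta>' * Q L rs ls x \<eta>' \<eta>) = (\<Sum>p<L. inR p + inL p)"
  proof -
    have "(\<Sum>\<eta>'\<in>Omega L N. w \<eta>' * Q L rs ls x \<eta>' \<eta>)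
      = (\<Sum>\<eta>'\<in>Omega L N. \<Sum>p<L.
           w \<eta>' * (if \<eta>' p = 1 \<and> \<eta>' ((p + 1) mod L) = 0 \<and> \<eta> = swap_sites \<eta>' p ((p + 1) mod L)
                then rate rs x (hR L \<eta>' p) (hL L \<eta>' p) else 0)
         + w \<eta>' * (if \<eta>' p = 1 \<and> \<eta>' ((p + (L - 1)) mod L) = 0 \<and> \<eta> = swap_sites \<eta>' p ((p + (L - 1)) mod L)
                then rate ls x (hL L \<eta>' p) (hR L \<eta>' p) else 0))"
      unfolding Q_def by (simp add: sum_distrib_left distrib_left)
    also have "\<dots> = (\<Sum>p<L. \<Sum>\<eta>'\<in>Omega L N.
           w \<eta>' * (if \<eta>' p = 1 \<and> \<eta>' ((p + 1) mod L) = 0 \<and> \<eta> = swap_sites \<eta>' p ((p + 1) mod L)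
                then rate rs x (hR L \<eta>' p) (hL L \<eta>' p) else 0)
         + w \<eta>' * (if \<eta>' p = 1 \<and> \<eta>' ((p + (L - 1)) mod L) = 0 \<and> \<eta> = swap_sites \<eta>' p ((p + (L - 1)) mod L)
                then rate ls x (hL L \<eta>' p) (hR L \<eta>' p) else 0))"
      by (rule sum.swap)
    also have "\<dots> = (\<Sum>p<L. inR p + inL p)"
    proof (rule sum.cong[OF refl])
      fix p assume p: "p \<in> {..<L}"
      have pl: "p < L" "(p+1) mod L < L" "(p + (L-1)) mod L < L" using p Lpos by auto
      show "(\<Sum>\<eta>'\<in>Omega L N.
           w \<eta>' * (if \<eta>' p = 1 \<and> \<eta>' ((p + 1) mod L) = 0 \<and> \<eta> = swap_sites \<eta>' p ((p + 1) mod L)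
                then rate rs x (hR L \<eta>' p) (hL L \<eta>' p) else 0)
         + w \<eta>' * (if \<eta>' p = 1 \<and> \<eta>' ((p + (L - 1)) mod L) = 0 \<and> \<eta> = swap_sites \<eta>' p ((p + (L - 1)) mod L)
                then rate ls x (hL L \<eta>' p) (hR L \<eta>' p) else 0)) = inR p + inL p"
        unfolding sum.distrib inR_def inL_def
        by (simp only: delta_in[OF pl(1) pl(2) neq1[OF pl(1)]] delta_in[OF pl(1) pl(3) neq2[OF pl(1)]])
    qed
    finally show ?thesis .
  qed
  have rhs: "(\<Sum>\<eta>'\<in>Omega L N. w \<eta> * Q L rs ls x \<eta> \<eta>') = w \<eta> * (\<Sum>p<L. outR p + outL p)"
  proof -
    have "(\<Sum>\<eta>'\<in>Omega L N. w \<eta> * Q L rs ls x \<eta> \<eta>') = w \<eta> * (\<Sum>\<eta>'\<in>Omega L N. Q L rs ls x \<eta> \<eta>')"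
      by (simp add: sum_distrib_left)
    also have "(\<Sum>\<eta>'\<in>Omega L N. Q L rs ls x \<eta> \<eta>') = (\<Sum>p<L. \<Sum>\<eta>'\<in>Omega L N.
        (if \<eta> p = 1 \<and> \<eta> ((p + 1) mod L) = 0 \<and> \<eta>' = swap_sites \<eta> p ((p + 1) mod L)
         then rate rs x (hR L \<eta> p) (hL L \<eta> p) else 0)
      + (if \<eta> p = 1 \<and> \<eta> ((p + (L - 1)) mod L) = 0 \<and> \<eta>' = swap_sites \<eta> p ((p + (L - 1)) mod L)
         then rate ls x (hL L \<eta> p) (hR L \<eta> p) else 0))"
      unfolding Q_def by (rule sum.swap)
    also have "\<dots> = (\<Sum>p<L. outR p + outL p)"
    proof (rule sum.cong[OF refl])
      fix p assume p: "p \<in> {..<L}"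
      have pl: "p < L" "(p+1) mod L < L" "(p + (L-1)) mod L < L" using p Lpos by auto
      show "(\<Sum>\<eta>'\<in>Omega L N.
        (if \<eta> p = 1 \<and> \<eta> ((p + 1) mod L) = 0 \<and> \<eta>' = swap_sites \<eta> p ((p + 1) mod L)
         then rate rs x (hR L \<eta> p) (hL L \<eta> p) else 0)
      + (if \<eta> p = 1 \<and> \<eta> ((p + (L - 1)) mod L) = 0 \<and> \<eta>' = swap_sites \<eta> p ((p + (L - 1)) mod L)
         then rate ls x (hL L \<eta> p) (hR L \<eta> p) else 0)) = outR p + outL p"
        unfolding sum.distrib outR_def outL_def
        using delta_out[of "\<eta> p = 1 \<and> \<eta> ((p + 1) mod L) = 0" "swap_sites \<eta> p ((p + 1) mod L)" "rate rs x (hR L \<eta> p) (hL L \<eta> p)"]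
          delta_out[of "\<eta> p = 1 \<and> \<eta> ((p + (L-1)) mod L) = 0" "swap_sites \<eta> p ((p + (L-1)) mod L)" "rate ls x (hL L \<eta> p) (hR L \<eta> p)"]
          swap_Omega[OF eta pl(1) pl(2)] swap_Omega[OF eta pl(1) pl(3)]
        by (simp only: conj_assoc)
    qed
    finally show ?thesis by simp
  qed
  have rotR: "(\<Sum>p<L. inR p) = (\<Sum>q<L. inR ((q + (L-1)) mod L))" by (rule rot_sum[OF Lpos, symmetric])
  have rotL: "(\<Sum>p<L. inL p) = (\<Sum>q<L. inL ((q + 1) mod L))" by (rule rot_sum[OF Lpos, symmetric])
  have siteA: "w \<eta> * outR q - inR ((q + (L-1)) mod L)
     = (if \<eta> q = 1 then w \<eta> * (phi rs (hR L \<eta> q) - phi rs (hL L \<eta> q)) else 0)" if q: "q < L" for q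
    unfolding w_def outR_def inR_def by (rule site_A[OF x q])
  have siteB: "w \<eta> * outL q - inL ((q + 1) mod L)
     = (if \<eta> q = 1 then w \<eta> * (phi ls (hL L \<eta> q) - phi ls (hR L \<eta> q)) else 0)" if q: "q < L" for q
    unfolding w_def outL_def inL_def by (rule site_B[OF x q])
  have "w \<eta> * (\<Sum>p<L. outR p + outL p) - (\<Sum>p<L. inR p + inL p)
     = (\<Sum>q<L. (w \<eta> * outR q - inR ((q + (L-1)) mod L)) + (w \<eta> * outL q - inL ((q + 1) mod L)))"
    by (simp add: sum.distrib sum_distrib_left sum_subtractf rotR rotL algebra_simps)
  also have "\<dots> = (\<Sum>q<L. (if \<eta> q = 1 then w \<eta> * (phi rs (hR L \<eta> q) - phi rs (hL L \<eta> q)) else 0)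
      + (if \<eta> q = 1 then w \<eta> * (phi ls (hL L \<eta> q) - phi ls (hR L \<eta> q)) else 0))"
    using siteA siteB by (intro sum.cong refl) simp
  also have "\<dots> = w \<eta> * ((\<Sum>q<L. if \<eta> q = 1 then phi rs (hR L \<eta> q) else 0) - (\<Sum>q<L. if \<eta> q = 1 then phi rs (hL L \<eta> q) else 0)
      + (\<Sum>q<L. if \<eta> q = 1 then phi ls (hL L \<eta> q) else 0) - (\<Sum>q<L. if \<eta> q = 1 then phi ls (hR L \<eta> q) else 0))"
  proof -
    have pt: "(if \<eta> q = 1 then w \<eta> * (phi rs (hR L \<eta> q) - phi rs (hL L \<eta> q)) else 0)
      + (if \<eta> q = 1 then w \<eta> * (phi ls (hL L \<eta> q) - phi ls (hR L \<eta> q)) else 0)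
      = w \<eta> * ((if \<eta> q = 1 then phi rs (hR L \<eta> q) else 0) - (if \<eta> q = 1 then phi rs (hL L \<eta> q) else 0)
      + (if \<eta> q = 1 then phi ls (hL L \<eta> q) else 0) - (if \<eta> q = 1 then phi ls (hR L \<eta> q) else 0))" for q
      by (cases "\<eta> q = 1") (simp_all add: algebra_simps)
    show ?thesis unfolding pt by (simp only: sum_distrib_left[symmetric] sum.distrib sum_subtractf)
  qed
  also have "\<dots> = 0" using tele[of "phi rs"] tele[of "phi ls"] by simp
  finally have "w \<eta> * (\<Sum>p<L. outR p + outL p) = (\<Sum>p<L. inR p + inL p)" by simp
  then show ?thesis using lhs rhs unfolding w_def by simp
qed

end

theorem theorem1:
  fixes L N :: nat and x :: real and rs ls :: "nat \<Rightarrow> real"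
  assumes "2 \<le> N" and "N \<le> L - 1" and "x > 0"
    and "\<forall>k n. k + n \<le> L - N \<longrightarrow> 0 \<le> rate rs x k n \<and> 0 \<le> rate ls x k n"
  shows "invariant_measure (Omega L N) (Q L rs ls x) (pihat L N x)"
  unfolding invariant_measure_def
proof
  fix \<eta> assume eta: "\<eta> \<in> Omega L N"
  have NL: "N < L" using assms(1,2) by linarith
  interpret cfg L N \<eta> using assms(1) NL eta by unfold_locales
  define C where "C = (\<Sum>\<zeta>\<in>Omega L N. x ^ nn_pairs L \<zeta>)"
  have p: "pihat L N x \<zeta> = x ^ nn_pairs L \<zeta> / C" for \<zeta> by (simp add: pihat_def C_def)
  have "(\<Sum>\<eta>'\<in>Omega L N. pihat L N x \<eta>' * Q L rs ls x \<eta>' \<eta>)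
      = (\<Sum>\<eta>'\<in>Omega L N. x ^ nn_pairs L \<eta>' * Q L rs ls x \<eta>' \<eta>) / C"
    unfolding p by (simp add: sum_divide_distrib)
  also have "\<dots> = (\<Sum>\<eta>'\<in>Omega L N. x ^ nn_pairs L \<eta> * Q L rs ls x \<eta> \<eta>') / C"
    using balance[OF assms(3)] by simp
  also have "\<dots> = (\<Sum>\<eta>'\<in>Omega L N. pihat L N x \<eta> * Q L rs ls x \<eta> \<eta>')"
    unfolding p by (simp add: sum_divide_distrib)
  finally show "(\<Sum>\<eta>'\<in>Omega L N. pihat L N x \<eta>' * Q L rs ls x \<eta>' \<eta>)
      = (\<Sum>\<eta>'\<in>Omega L N. pihat L N x \<eta> * Q L rs ls x \<eta> \<eta>')" .
qed

end
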